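(* Let $X=(\mathbb{R}/\mathbb{Z})^2$ with Lebesgue measure $\mu$, let $f\colon X\to X$ be $f(x,y)=(x+y,y)$, and let $\varphi\colon X\to\mathbb{C}$ be $\varphi(x,y)=e(x)$, where $e(z)=\exp(2\pi i z)$. Let $(a_p)$ be a sequence indexed by the primes, with $a_p$ an integer, $0\leq a_p<p$, such that for almost every $y\in[0,1]$ the set of primes $p$ with $|y-a_p/p|\leq 1/(2p)$ is infinite. For each prime $p$ and $n\in\mathbb{Z}$ let $t_p(n)=e(-na_p/p)$, and define $s_p\colon X\to\mathbb{C}$ by $$s_p(x,y)=\frac{1}{p}\sum_{0\leq n<p}t_p(n)\,\varphi(f^n(x,y)).$$ Then: (1) the sequence $(s_p)$ does not converge $\mu$-almost everywhere as $p\to+\infty$; (2) if $\mathsf{P}$ is an infinite set of primes such that $\sum_{p\in\mathsf{P}}\frac{\log p}{p}<+\infty$, then the sequence $(s_p)_{p\in\mathsf{P}}$ converges $\mu$-almost everywhere to $0$.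
   Context: Such sequences $(a_p)$ exist (the paper chooses one via its main theorem with $c=1/2$); the proposition is stated for any such sequence. *)

theory Defs
  imports "HOL-Analysis.Analysis"
begin

text \<open>The torus (R/Z)^2 is represented by the fundamental domain [0,1) x [0,1),
  with Lebesgue measure (restriction of lborel on real x real).\<close>

definition torus :: "(real \<times> real) set" where
  "torus = {0..<1} \<times> {0..<1}"

definition e :: "real \<Rightarrow> complex" where
  "e z = exp (2 * of_real pi * \<i> * of_real z)"

definition skew :: "real \<times> real \<Rightarrow> real \<times> real" where
  "skew z = (frac (fst z + snd z), snd z)"

definition phi :: "real \<times> real \<Rightarrow> complex" where
  "phi z = e (fst z)"

definition t :: "(nat \<Rightarrow> int) \<Rightarrow> nat \<Rightarrow> int \<Rightarrow> complex" where
  "t a p n = e (- (of_int n * of_int (a p) / real p))"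

definition s :: "(nat \<Rightarrow> int) \<Rightarrow> nat \<Rightarrow> real \<times> real \<Rightarrow> complex" where
  "s a p z = (1 / of_nat p) * (\<Sum>n<p. t a p (int n) * phi ((skew ^^ n) z))"

end

theory Submission imports Defs "HOL-Computational_Algebra.Primes" begin

lemma e_cis: "e z = cis (2 * pi * z)"
  by (simp add: e_def cis_conv_exp mult_ac)

lemma e_add: "e (a + b) = e a * e b"
  by (simp add: e_def distrib_left distrib_right exp_add)

lemma e_int: "e (real_of_int k) = 1"
  unfolding e_cis by (rule cis_multiple_2pi) simp

lemma norm_e [simp]: "norm (e z) = 1"
  by (simp add: e_cis)

lemma e_frac: "e (frac w) = e w"
proof -
  have "e w = e (frac w + real_of_int \<lfloor>w\<rfloor>)" by (simp add: frac_def)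
  also have "\<dots> = e (frac w)" by (simp add: e_add e_int)
  finally show ?thesis by simp
qed

lemma snd_skew_pow: "snd ((skew ^^ n) z) = snd z"
  by (induction n) (simp_all add: skew_def)

lemma skew_pow: "snd ((skew ^^ n) z) = snd z \<and> e (fst ((skew ^^ n) z)) = e (fst z + real n * snd z)"
proof -
  have "e (fst ((skew ^^ n) z)) = e (fst z + real n * snd z)"
  proof (induction n)
    case 0 then show ?case by simp
  next
    case (Suc n)
    have eq: "(skew ^^ Suc n) z = skew ((skew ^^ n) z)" by simp
    have "e (fst ((skew ^^ Suc n) z)) = e (fst ((skew ^^ n) z) + snd ((skew ^^ n) z))"
      unfolding eq by (simp only: skew_def fst_conv e_frac)
    also have "\<dots> = e (fst ((skew ^^ n) z)) * e (snd ((skew ^^ n) z))" by (rule e_add)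
    also have "\<dots> = e (fst z + real n * snd z) * e (snd z)" using Suc.IH by (simp only: snd_skew_pow)
    also have "\<dots> = e (fst z + real (Suc n) * snd z)" by (simp add: e_add[symmetric] algebra_simps)
    finally show ?case .
  qed
  then show ?thesis by (simp add: snd_skew_pow)
qed

definition G :: "nat \<Rightarrow> real \<Rightarrow> complex" where
  "G p th = (\<Sum>n<p. e (real n * th))"

lemma s_formula: "s a p z = e (fst z) * (G p (snd z - real_of_int (a p) / real p) / of_nat p)"
proof -
  have "t a p (int n) * phi ((skew ^^ n) z) = e (fst z) * e (real n * (snd z - real_of_int (a p) / real p))" for n
  proof -
    have "t a p (int n) * phi ((skew ^^ n) z) = e (- (real n * real_of_int (a p) / real p)) * e (fst z + real n * snd z)"
      using skew_pow[of n z] by (simp add: t_def phi_def)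
    also have "\<dots> = e (fst z) * e (real n * (snd z - real_of_int (a p) / real p))"
      by (simp add: e_add[symmetric] algebra_simps)
    finally show ?thesis .
  qed
  then show ?thesis by (simp add: s_def G_def sum_distrib_left sum_divide_distrib)
qed

lemma norm_s: "norm (s a p z) = norm (G p (snd z - real_of_int (a p) / real p)) / real p"
  by (simp add: s_formula norm_mult norm_divide)


lemma cos_lb: "cos (x::real) \<ge> 1 - x^2 / 2"
proof -
  have "cos x = 1 - 2 * sin (x/2) ^ 2" using cos_double_sin[of "x/2"] by simp
  moreover have "sin (x/2) ^ 2 \<le> (x/2)^2"
    using abs_sin_x_le_abs_x[of "x/2"] by (simp only: abs_le_square_iff)
  ultimately show ?thesis by (simp add: power_divide)
qed

lemma s3: "(\<Sum>m<3. sin_coeff m * (x::real) ^ m) = x"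
proof -
  have "(\<Sum>m<3. sin_coeff m * (x::real) ^ m) = sin_coeff 0 * x^0 + sin_coeff 1 * x^1 + sin_coeff 2 * x^2"
    by (simp only: numeral_3_eq_3 numeral_2_eq_2 sum.lessThan_Suc lessThan_0 sum.empty One_nat_def add_0)
  also have "sin_coeff 1 = 1" by (simp add: sin_coeff_def)
  also have "sin_coeff 2 = 0" by (simp add: sin_coeff_def)
  finally show ?thesis by simp
qed
lemma sin_lb: "sin (x::real) \<ge> x - \<bar>x\<bar>^3 / 6"
proof -
  have 1: "\<bar>sin x - (\<Sum>m<3. sin_coeff m * x ^ m)\<bar> \<le> inverse (fact 3) * \<bar>x\<bar> ^ 3"
    by (rule Maclaurin_sin_bound)
  have 2: "(fact 3 :: real) = 6" by (simp add: fact_numeral)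
  have "\<bar>sin x - x\<bar> \<le> inverse 6 * \<bar>x\<bar> ^ 3" using 1 unfolding s3 2 .
  moreover have "inverse 6 * \<bar>x\<bar> ^ 3 = \<bar>x\<bar>^3 / 6" by (rule inverse_eq_divide[THEN arg_cong[where f="\<lambda>t. t * \<bar>x\<bar>^3"], THEN trans]) simp
  ultimately show ?thesis by linarith
qed

lemma abs_sin_lb: fixes x :: real assumes "\<bar>x\<bar> \<le> 2" shows "\<bar>sin x\<bar> \<ge> \<bar>x\<bar> / 3"
proof -
  have 1: "sin \<bar>x\<bar> \<ge> \<bar>x\<bar> - \<bar>x\<bar>^3/6" using sin_lb[of "\<bar>x\<bar>"] by simp
  have 2: "\<bar>x\<bar>^3 = \<bar>x\<bar> * \<bar>x\<bar>^2" by (simp add: power3_eq_cube power2_eq_square)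
  have "\<bar>x\<bar>^2 \<le> 2^2" using assms by (intro power_mono) auto
  then have 3: "\<bar>x\<bar> * \<bar>x\<bar>^2 \<le> \<bar>x\<bar> * 4" by (intro mult_left_mono) auto
  have 4: "\<bar>sin \<bar>x\<bar>\<bar> = \<bar>sin x\<bar>" by (cases "x \<ge> 0") auto
  from 1 2 3 have "sin \<bar>x\<bar> \<ge> \<bar>x\<bar> / 3" by linarith
  with 4 show ?thesis by linarith
qed

lemma norm_1_minus_cis: "norm (1 - cis u) = 2 * \<bar>sin (u/2)\<bar>"
proof -
  have "(norm (1 - cis u))^2 = (1 - cos u)^2 + (sin u)^2"
    by (simp add: cmod_def)
  also have "\<dots> = 2 - 2 * cos u" using sin_cos_squared_add[of u] by (simp add: power2_diff)
  also have "\<dots> = (2 * \<bar>sin (u/2)\<bar>)^2" using cos_double_sin[of "u/2"] by (simp add: power_mult_distrib)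
  finally have "(norm (1 - cis u))^2 = (2 * \<bar>sin (u/2)\<bar>)^2" .
  then show ?thesis by (subst (asm) power2_eq_iff_nonneg) auto
qed

lemma sum_real_n: "(\<Sum>n<p. real n) = real p * (real p - 1) / 2"
  by (induction p) (simp_all add: algebra_simps)

lemma sum_real_n2: "(\<Sum>n<p. real n ^ 2) = real p * (real p - 1) * (2 * real p - 1) / 6"
  by (induction p) (simp_all add: algebra_simps power2_eq_square)

lemma sum_centered: "(\<Sum>n<p. (real n - (real p - 1)/2)^2) = (real p ^ 3 - real p) / 12"
proof -
  have "(\<Sum>n<p. (real n - (real p - 1)/2)^2) = (\<Sum>n<p. real n ^ 2) - (real p - 1) * (\<Sum>n<p. real n) + real p * ((real p - 1)/2)^2"
  proof -
    have "(real n - (real p - 1)/2)^2 = real n ^ 2 - (real p - 1) * real n + ((real p - 1)/2)^2" for n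
      by (simp add: power2_eq_square algebra_simps)
    then have "(\<Sum>n<p. (real n - (real p - 1)/2)^2) = (\<Sum>n<p. real n ^ 2 - (real p - 1) * real n + ((real p - 1)/2)^2)"
      by simp
    also have "\<dots> = (\<Sum>n<p. real n ^ 2) - (\<Sum>n<p. (real p - 1) * real n) + real p * ((real p - 1)/2)^2"
      by (simp add: sum.distrib sum_subtractf)
    finally show ?thesis by (simp add: sum_distrib_left)
  qed
  also have "\<dots> = (real p ^ 3 - real p) / 12"
    unfolding sum_real_n sum_real_n2 by (simp add: power2_eq_square power3_eq_cube field_simps)
  finally show ?thesis .
qed


lemma Re_e: "Re (e u) = cos (2 * pi * u)"
  by (simp add: e_cis)

lemma e_nat_mult: "e (real n * th) = e th ^ n"
proof (induction n)
  case 0 then show ?case by (simp add: e_def)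
next
  case (Suc n)
  have "e (real (Suc n) * th) = e (real n * th + th)" by (simp add: algebra_simps)
  then show ?case using Suc by (simp add: e_add mult.commute)
qed

lemma G_lower:
  assumes p: "p \<ge> 1" and th: "\<bar>th\<bar> \<le> 1 / (2 * real p)"
  shows "norm (G p th) \<ge> real p / 3"
proof -
  define c where "c = (real p - 1) / 2"
  define K where "K = (\<Sum>n<p. (real n - c)^2)"
  have K: "K = (real p ^ 3 - real p) / 12" unfolding K_def c_def by (rule sum_centered)
  have Kle: "K \<le> real p ^ 3 / 12" using K by simp
  have K0: "K \<ge> 0" unfolding K_def by (intro sum_nonneg) simp
  have eq: "e (- (c * th)) * G p th = (\<Sum>n<p. e ((real n - c) * th))"
    unfolding G_def sum_distrib_left by (intro sum.cong) (simp_all add: e_add[symmetric] algebra_simps)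
  have "norm (G p th) = norm (e (- (c * th)) * G p th)" by (simp add: norm_mult)
  then have "norm (G p th) = norm (\<Sum>n<p. e ((real n - c) * th))"
    by (simp only: eq)
  also have "\<dots> \<ge> Re (\<Sum>n<p. e ((real n - c) * th))" by (rule complex_Re_le_cmod)
  finally have 1: "norm (G p th) \<ge> (\<Sum>n<p. cos (2 * pi * ((real n - c) * th)))"
    by (simp add: Re_e)
  have "(\<Sum>n<p. cos (2 * pi * ((real n - c) * th))) \<ge> (\<Sum>n<p. 1 - 2 * pi^2 * th^2 * (real n - c)^2)"
  proof (intro sum_mono)
    fix n
    have "cos (2 * pi * ((real n - c) * th)) \<ge> 1 - (2 * pi * ((real n - c) * th))^2/2" by (rule cos_lb)
    also have "(2 * pi * ((real n - c) * th))^2/2 = 2 * pi^2 * th^2 * (real n - c)^2"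
      by (simp add: power_mult_distrib)
    finally show "1 - 2 * pi^2 * th^2 * (real n - c)^2 \<le> cos (2 * pi * ((real n - c) * th))" .
  qed
  also have "(\<Sum>n<p. 1 - 2 * pi^2 * th^2 * (real n - c)^2) = real p - 2 * pi^2 * th^2 * K"
    unfolding K_def by (simp add: sum_subtractf sum_distrib_left)
  finally have 2: "norm (G p th) \<ge> real p - 2 * pi^2 * th^2 * K" using 1 by linarith
  have pp: "real p > 0" using p by simp
  have "\<bar>th\<bar> \<le> \<bar>1 / (2 * real p)\<bar>" using th by simp
  then have "th^2 \<le> (1 / (2 * real p))^2" by (simp only: abs_le_square_iff)
  then have th2: "th^2 \<le> 1 / (4 * real p ^ 2)" by (simp add: power_divide power_mult_distrib)
  have "pi^2 \<le> 4^2" by (rule power_mono) (use pi_less_4 in auto)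
  then have pi2: "pi^2 \<le> 16" by simp
  have h1: "pi^2 * th^2 \<le> 16 * (1 / (4 * real p ^ 2))"
    by (rule mult_mono[OF pi2 th2]) simp_all
  have "pi^2 * th^2 * K \<le> 16 * (1 / (4 * real p ^ 2)) * (real p ^ 3 / 12)"
    by (rule mult_mono[OF h1 Kle]) (simp_all add: K0)
  also have "\<dots> = real p / 3" using pp by (simp add: field_simps power2_eq_square power3_eq_cube)
  finally show ?thesis using 2 by linarith
qed

lemma G_upper:
  assumes th': "th' = th - real_of_int k" and nz: "th' \<noteq> 0" and le: "\<bar>th'\<bar> \<le> 1/2"
  shows "norm (G p th) \<le> 2 / \<bar>th'\<bar>"
proof -
  define w where "w = e th"
  have "th = th' + real_of_int k" using th' by simp
  then have "e th = e th' * e (real_of_int k)" by (simp only: e_add)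
  then have w: "w = e th'" unfolding w_def by (simp only: e_int mult_1_right)
  have n1: "norm (1 - w) = 2 * \<bar>sin (pi * th')\<bar>" unfolding w e_cis norm_1_minus_cis by simp
  have pt: "\<bar>pi * th'\<bar> = pi * \<bar>th'\<bar>" by (simp add: abs_mult)
  have "pi * \<bar>th'\<bar> \<le> 4 * (1/2)"
    by (rule mult_mono) (use le pi_less_4 in simp_all)
  then have "\<bar>pi * th'\<bar> \<le> 2" using pt by simp
  then have n2: "\<bar>sin (pi * th')\<bar> \<ge> \<bar>pi * th'\<bar> / 3" by (rule abs_sin_lb)
  have "pi * \<bar>th'\<bar> \<ge> 2 * \<bar>th'\<bar>" by (rule mult_right_mono[OF pi_ge_two]) simp
  then have n3: "\<bar>pi * th'\<bar> / 3 \<ge> \<bar>th'\<bar> / 2" using pt by simp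
  from n1 n2 n3 have nw: "norm (1 - w) \<ge> \<bar>th'\<bar>" by linarith
  have thp: "\<bar>th'\<bar> > 0" using nz by simp
  then have w1: "w \<noteq> 1" using nw by auto
  have "G p th = (\<Sum>n<p. w ^ n)" unfolding G_def e_nat_mult w_def ..
  also have "\<dots> = (1 - w ^ p) / (1 - w)" using sum_gp_strict[of w p] w1 by simp
  finally have "norm (G p th) = norm (1 - w ^ p) / norm (1 - w)" by (simp add: norm_divide)
  also have "\<dots> \<le> 2 / norm (1 - w)"
  proof (rule divide_right_mono)
    have "norm (1 - w ^ p) \<le> norm (1::complex) + norm (w ^ p)" by (rule norm_triangle_ineq4)
    also have "\<dots> = 2" by (simp add: w_def norm_power)
    finally show "norm (1 - w ^ p) \<le> 2" .
  qed simp
  also have "\<dots> \<le> 2 / \<bar>th'\<bar>"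
  proof (rule divide_left_mono)
    show "0 < norm (1 - w) * \<bar>th'\<bar>" using nw thp w1 by (intro mult_pos_pos) simp_all
  qed (use nw thp in simp_all)
  finally show ?thesis .
qed


lemma pointwise_bound:
  fixes y b del :: real
  assumes y: "0 \<le> y" "y \<le> 1" and b: "0 \<le> b" "b < 1" and del: "del > 0"
    and notin: "\<And>k::int. k \<in> {-1,0,1} \<Longrightarrow> \<bar>y - b - real_of_int k\<bar> > del"
  shows "norm (G p (y - b)) \<le> 2 / del"
proof -
  define th where "th = y - b"
  define k :: int where "k = (if th < -1/2 then -1 else if th \<le> 1/2 then 0 else 1)"
  have kin: "k \<in> {-1,0,1}" unfolding k_def by auto
  have le: "\<bar>th - real_of_int k\<bar> \<le> 1/2" unfolding k_def th_def using y b by (auto split: abs_split)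
  have gt: "\<bar>th - real_of_int k\<bar> > del" using notin[OF kin] unfolding th_def by simp
  have "norm (G p th) \<le> 2 / \<bar>th - real_of_int k\<bar>"
    by (rule G_upper[OF refl]) (use gt del le in auto)
  also have "\<dots> \<le> 2 / del" using gt del by (intro divide_left_mono) auto
  finally show ?thesis unfolding th_def .
qed

definition badset :: "real \<Rightarrow> real \<Rightarrow> real set" where
  "badset b del = {b - 1 - del .. b - 1 + del} \<union> {b - del .. b + del} \<union> {b + 1 - del .. b + 1 + del}"

lemma badset_mem: "y \<notin> badset b del \<Longrightarrow> k \<in> {-1,0,1::int} \<Longrightarrow> \<bar>y - b - real_of_int k\<bar> > del"
  unfolding badset_def by auto

lemma badset_sets [measurable]: "badset b del \<in> sets lborel"
  unfolding badset_def by simp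

lemma badset_sets_borel: "badset b del \<in> sets borel"
  unfolding badset_def by simp

lemma badset_fin: "emeasure lborel (badset b del) < \<infinity>"
proof -
  have "emeasure lborel (badset b del) \<le> emeasure lborel {b - 1 - \<bar>del\<bar> .. b + 1 + \<bar>del\<bar>}"
    by (rule emeasure_mono) (auto simp: badset_def)
  also have "\<dots> < \<infinity>" by simp
  finally show ?thesis .
qed

lemma badset_measure: assumes "del \<ge> 0" shows "measure lborel (badset b del) \<le> 6 * del"
proof -
  have m: "measure lborel {l .. l + 2 * del} = 2 * del" for l
    using assms by (simp add: measure_def)
  have "measure lborel (badset b del) \<le> measure lborel ({b - 1 - del .. b - 1 + del} \<union> {b - del .. b + del}) + measure lborel {b + 1 - del .. b + 1 + del}"
    unfolding badset_def by (rule measure_Un_le) auto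
  also have "\<dots> \<le> measure lborel {b - 1 - del .. b - 1 + del} + measure lborel {b - del .. b + del} + measure lborel {b + 1 - del .. b + 1 + del}"
    using measure_Un_le[of "{b - 1 - del .. b - 1 + del}" lborel "{b - del .. b + del}"] by simp
  also have "\<dots> = 6 * del"
    using m[of "b - 1 - del"] m[of "b - del"] m[of "b + 1 - del"] by (simp add: algebra_simps)
  finally show ?thesis .
qed

lemma conv_AE:
  fixes a :: "nat \<Rightarrow> int" and P :: "nat set"
  assumes aP: "\<And>p. p \<in> P \<Longrightarrow> p > 0 \<and> 0 \<le> a p \<and> a p < int p"
    and sumP: "(\<lambda>p. 1 / real p) summable_on P"
  shows "AE y in lborel. y \<in> {0..1} \<longrightarrow>
     ((\<lambda>p. norm (G p (y - real_of_int (a p) / real p)) / real p) \<longlongrightarrow> 0) (inf sequentially (principal P))"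
proof -
  define b where "b p = real_of_int (a p) / real p" for p
  define A where "A m p = (if p \<in> P then badset (b p) (2 * (real m + 1) / real p) else {})" for m p :: nat
  have Asets [measurable]: "A m p \<in> sets lborel" for m p unfolding A_def by (auto simp: badset_sets_borel)
  have Afin: "emeasure lborel (A m p) < \<infinity>" for m p
    using badset_fin[of "b p" "2 * (real m + 1) / real p"] unfolding A_def by simp
  define f where "f p = (if p \<in> P then 1 / real p else 0)" for p
  have "f summable_on UNIV"
    using sumP unfolding f_def by (subst summable_on_cong_neutral[where T = P]) auto
  then have fs: "summable f" by (subst (asm) summable_on_UNIV_nonneg_real_iff) (auto simp: f_def)
  have Asum: "summable (\<lambda>p. measure lborel (A m p))" for m
  proof (rule summable_comparison_test')
    show "summable (\<lambda>p. 12 * (real m + 1) * f p)" using fs by (rule summable_mult)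
    fix p :: nat
    show "norm (measure lborel (A m p)) \<le> 12 * (real m + 1) * f p"
    proof (cases "p \<in> P")
      case True
      have "measure lborel (badset (b p) (2 * (real m + 1) / real p)) \<le> 6 * (2 * (real m + 1) / real p)"
        by (rule badset_measure) simp
      then have "measure lborel (A m p) \<le> 6 * (2 * (real m + 1) / real p)"
        unfolding A_def using True by (simp only: if_True)
      then show ?thesis using True by (simp add: f_def)
    next
      case False then show ?thesis by (simp add: A_def f_def)
    qed
  qed
  have "\<forall>m. AE y in lborel. eventually (\<lambda>p. y \<in> space lborel - A m p) sequentially"
    using borel_cantelli_AE1[OF Asets Afin Asum] by blast
  then have "AE y in lborel. \<forall>m. eventually (\<lambda>p. y \<in> space lborel - A m p) sequentially"
    by (simp add: AE_all_countable)
  then show ?thesis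
  proof (rule AE_mp, intro AE_I2 impI)
    fix y :: real
    assume ev: "\<forall>m. eventually (\<lambda>p. y \<in> space lborel - A m p) sequentially" and y: "y \<in> {0..1}"
    show "((\<lambda>p. norm (G p (y - real_of_int (a p) / real p)) / real p) \<longlongrightarrow> 0) (inf sequentially (principal P))"
    proof (rule tendstoI)
      fix eps :: real assume eps: "eps > 0"
      obtain m :: nat where m: "inverse (real (Suc m)) < eps" using reals_Archimedean[OF eps] by blast
      have "eventually (\<lambda>p. p \<in> P \<longrightarrow> dist (norm (G p (y - real_of_int (a p) / real p)) / real p) 0 < eps) sequentially"
        using ev[rule_format, of m]
      proof (rule eventually_mono, intro impI)
        fix p assume yA: "y \<in> space lborel - A m p" and pP: "p \<in> P"
        have ap: "p > 0" "0 \<le> a p" "a p < int p" using aP[OF pP] by auto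
        have b: "0 \<le> b p" "b p < 1" using ap by (auto simp: b_def field_simps)
        have del: "2 * (real m + 1) / real p > 0" using ap by simp
        have "norm (G p (y - b p)) \<le> 2 / (2 * (real m + 1) / real p)"
          using y b del yA pP by (intro pointwise_bound badset_mem) (auto simp: A_def)
        also have "\<dots> = real p / (real m + 1)" by (simp add: field_simps)
        finally have "norm (G p (y - b p)) / real p \<le> 1 / (real m + 1)" using ap by (simp add: field_simps)
        also have "\<dots> < eps" using m by (simp add: inverse_eq_divide add.commute)
        finally show "dist (norm (G p (y - real_of_int (a p) / real p)) / real p) 0 < eps"
          by (simp add: b_def)
      qed
      then show "eventually (\<lambda>p. dist (norm (G p (y - real_of_int (a p) / real p)) / real p) 0 < eps) (inf sequentially (principal P))"
        by (simp add: eventually_inf_principal)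
    qed
  qed
qed


lemma AE_snd:
  assumes "AE y in lborel. Q y"
  shows "AE z in (lborel :: (real \<times> real) measure). Q (snd z)"
proof -
  obtain N where N: "N \<in> null_sets lborel" "{y. \<not> Q y} \<subseteq> N"
    using assms unfolding eventually_ae_filter by auto
  have "UNIV \<times> N \<in> null_sets (lborel \<Otimes>\<^sub>M (lborel :: real measure))"
    using N by (intro lborel.times_in_null_sets2) auto
  then have "UNIV \<times> N \<in> null_sets (lborel :: (real \<times> real) measure)"
    by (simp add: lborel_prod)
  moreover have "{z \<in> space lborel. \<not> Q (snd z)} \<subseteq> UNIV \<times> N" using N by auto
  ultimately show ?thesis unfolding eventually_ae_filter by blast
qed

lemma torus_sets: "torus \<in> sets (lborel :: (real \<times> real) measure)"
proof -
  have "{0..<(1::real)} \<times> {0..<(1::real)} \<in> sets (lborel \<Otimes>\<^sub>M (lborel :: real measure))"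
    by (intro pair_measureI) (simp_all add: atLeastLessThan_borel)
  then show ?thesis unfolding lborel_prod torus_def .
qed

lemma torus_measure: "emeasure (lborel :: (real \<times> real) measure) torus = 1"
proof -
  have "emeasure (lborel \<Otimes>\<^sub>M (lborel :: real measure)) ({0..<(1::real)} \<times> {0..<(1::real)}) = emeasure lborel {0..<(1::real)} * emeasure lborel {0..<(1::real)}"
    by (rule lborel.emeasure_pair_measure_Times) (simp_all add: atLeastLessThan_borel)
  then show ?thesis by (simp add: lborel_prod torus_def)
qed

lemma nontriv: "infinite (P :: nat set) \<Longrightarrow> inf sequentially (principal P) \<noteq> bot"
  unfolding trivial_limit_def eventually_inf_principal eventually_sequentially
  using infinite_nat_iff_unbounded_le by auto

primrec q :: "nat \<Rightarrow> nat" where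
  "q 0 = 2"
| "q (Suc k) = (SOME p. prime p \<and> p > 2 * q k)"

lemma q_props: "prime (q k) \<and> q k \<ge> 2 ^ Suc k"
proof (induction k)
  case 0 then show ?case by simp
next
  case (Suc k)
  have "prime (q (Suc k)) \<and> q (Suc k) > 2 * q k"
    unfolding q.simps by (rule someI_ex) (rule bigger_prime)
  then show ?case using Suc by auto
qed

lemma q_mono: "strict_mono q"
proof (rule strict_monoI_Suc)
  fix k
  have "prime (q (Suc k)) \<and> q (Suc k) > 2 * q k"
    unfolding q.simps by (rule someI_ex) (rule bigger_prime)
  then show "q k < q (Suc k)" by auto
qed

lemma q_summable: "(\<lambda>p. 1 / real p) summable_on range q"
proof -
  have "summable (\<lambda>k. 1 / real (q k))"
  proof (rule summable_comparison_test')
    show "summable (\<lambda>k. (1/2::real) ^ k)" by (rule summable_geometric) simp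
    fix k :: nat
    have "real (q k) \<ge> 2 ^ Suc k" using q_props[of k]
      by (metis of_nat_le_iff of_nat_numeral of_nat_power)
    moreover have "real (q k) > 0" using q_props[of k] prime_gt_0_nat by simp
    ultimately have "1 / real (q k) \<le> 1 / 2 ^ Suc k" by (intro divide_left_mono) auto
    also have "\<dots> \<le> 1 / 2 ^ k" by (rule divide_left_mono) simp_all
    also have "\<dots> = (1/2) ^ k" by (simp add: power_one_over)
    finally show "norm (1 / real (q k)) \<le> (1/2::real) ^ k" by simp
  qed
  then have "((\<lambda>p. 1 / real p) \<circ> q) summable_on UNIV"
    by (subst summable_on_UNIV_nonneg_real_iff) (auto simp: o_def)
  then show ?thesis
    using summable_on_reindex[of q UNIV "\<lambda>p. 1 / real p"] strict_mono_imp_inj_on[OF q_mono] by simp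
qed

lemma s_AE:
  fixes a :: "nat \<Rightarrow> int" and P :: "nat set"
  assumes aP: "\<And>p. p \<in> P \<Longrightarrow> p > 0 \<and> 0 \<le> a p \<and> a p < int p"
    and sumP: "(\<lambda>p. 1 / real p) summable_on P"
  shows "AE z in lborel. z \<in> torus \<longrightarrow> ((\<lambda>p. s a p z) \<longlongrightarrow> 0) (inf sequentially (principal P))"
proof -
  have "AE z in (lborel :: (real \<times> real) measure). snd z \<in> {0..1} \<longrightarrow>
     ((\<lambda>p. norm (G p (snd z - real_of_int (a p) / real p)) / real p) \<longlongrightarrow> 0) (inf sequentially (principal P))"
    by (rule AE_snd[OF conv_AE[OF aP sumP]]) auto
  then show ?thesis
  proof (rule AE_mp, intro AE_I2 impI)
    fix z :: "real \<times> real"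
    assume h: "snd z \<in> {0..1} \<longrightarrow> ((\<lambda>p. norm (G p (snd z - real_of_int (a p) / real p)) / real p) \<longlongrightarrow> 0) (inf sequentially (principal P))"
      and z: "z \<in> torus"
    have "snd z \<in> {0..1}" using z by (auto simp: torus_def)
    with h have "((\<lambda>p. norm (s a p z)) \<longlongrightarrow> 0) (inf sequentially (principal P))"
      by (simp add: norm_s)
    then show "((\<lambda>p. s a p z) \<longlongrightarrow> 0) (inf sequentially (principal P))"
      by (rule tendsto_norm_zero_cancel)
  qed
qed


theorem proposition4p1:
  fixes a :: "nat \<Rightarrow> int"
  assumes a_range: "\<And>p. prime p \<Longrightarrow> 0 \<le> a p \<and> a p < int p"
    and a_approx: "AE y in lborel. y \<in> {0..1} \<longrightarrow>
       infinite {p::nat. prime p \<and> \<bar>y - real_of_int (a p) / real p\<bar> \<le> 1 / (2 * real p)}"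
  shows "(\<not> (AE z in lborel. z \<in> torus \<longrightarrow>
            (\<exists>L. ((\<lambda>p. s a p z) \<longlongrightarrow> L) (inf sequentially (principal {p. prime p})))))
         \<and> (\<forall>P. P \<subseteq> {p. prime p} \<longrightarrow> infinite P \<longrightarrow>
            (\<lambda>p. ln (real p) / real p) summable_on P \<longrightarrow>
            (AE z in lborel. z \<in> torus \<longrightarrow>
               ((\<lambda>p. s a p z) \<longlongrightarrow> 0) (inf sequentially (principal P))))"
proof (intro conjI allI impI notI)
  fix P :: "nat set"
  assume PP: "P \<subseteq> {p. prime p}" and Pinf: "infinite P" and Psum: "(\<lambda>p. ln (real p) / real p) summable_on P"
  have aP: "p > 0 \<and> 0 \<le> a p \<and> a p < int p" if "p \<in> P" for p
  proof -
    have pr: "prime p" using PP that by auto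
    show ?thesis using a_range[OF pr] prime_gt_0_nat[OF pr] by simp
  qed
  have "(\<lambda>p. (1 / ln 2) * (ln (real p) / real p)) summable_on P"
    using Psum by (rule summable_on_cmult_right)
  then have sum1: "(\<lambda>p. 1 / real p) summable_on P"
  proof (rule summable_on_comparison_test)
    fix p assume "p \<in> P"
    then have "prime p" using PP by auto
    then have p2: "p \<ge> 2" by (rule prime_ge_2_nat)
    then have "ln 2 \<le> ln (real p)" by simp
    moreover have "ln (2::real) > 0" by simp
    ultimately have "1 \<le> (1 / ln 2) * ln (real p)" by (simp add: field_simps)
    then have "1 / real p \<le> ((1 / ln 2) * ln (real p)) / real p" by (rule divide_right_mono) simp
    then show "1 / real p \<le> (1 / ln 2) * (ln (real p) / real p)" by simp
  qed simp
  show "AE z in lborel. z \<in> torus \<longrightarrow> ((\<lambda>p. s a p z) \<longlongrightarrow> 0) (inf sequentially (principal P))"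
  proof (rule s_AE)
    show "(\<lambda>p. 1 / real p) summable_on P" by (rule sum1)
  qed (rule aP)
next
  assume H: "AE z in lborel. z \<in> torus \<longrightarrow> (\<exists>L. ((\<lambda>p. s a p z) \<longlongrightarrow> L) (inf sequentially (principal {p. prime p})))"
  define P0 where "P0 = range q"
  have P0p: "P0 \<subseteq> {p. prime p}" unfolding P0_def using q_props by auto
  have P0inf: "infinite P0" unfolding P0_def by (rule range_inj_infinite[OF strict_mono_imp_inj_on[OF q_mono]])
  have aP: "p > 0 \<and> 0 \<le> a p \<and> a p < int p" if "p \<in> P0" for p
  proof -
    have pr: "prime p" using P0p that by auto
    show ?thesis using a_range[OF pr] prime_gt_0_nat[OF pr] by simp
  qed
  have A0: "AE z in lborel. z \<in> torus \<longrightarrow> ((\<lambda>p. s a p z) \<longlongrightarrow> 0) (inf sequentially (principal P0))"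
  proof (rule s_AE)
    show "(\<lambda>p. 1 / real p) summable_on P0" unfolding P0_def by (rule q_summable)
  qed (rule aP)
  have A1': "AE z in (lborel :: (real \<times> real) measure). snd z \<in> {0..1} \<longrightarrow>
       infinite {p::nat. prime p \<and> \<bar>snd z - real_of_int (a p) / real p\<bar> \<le> 1 / (2 * real p)}"
    by (rule AE_snd[OF a_approx])
  have "AE z in lborel. z \<notin> torus"
    using H A0 A1'
  proof (eventually_elim)
    case (elim z)
    show "z \<notin> torus"
    proof
      assume zt: "z \<in> torus"
      then have zy: "snd z \<in> {0..1}" by (auto simp: torus_def)
      from elim(1) zt have "\<exists>L. ((\<lambda>p. s a p z) \<longlongrightarrow> L) (inf sequentially (principal {p. prime p}))"
        by (rule mp)
      then obtain L where L: "((\<lambda>p. s a p z) \<longlongrightarrow> L) (inf sequentially (principal {p. prime p}))"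
        by (elim exE)
      have F: "inf sequentially (principal P0) \<le> inf sequentially (principal {p. prime p})"
        by (rule inf_mono[OF order_refl]) (simp add: P0p)
      have "((\<lambda>p. s a p z) \<longlongrightarrow> L) (inf sequentially (principal P0))"
        using L F by (rule tendsto_mono[rotated])
      moreover have "((\<lambda>p. s a p z) \<longlongrightarrow> 0) (inf sequentially (principal P0))" using elim(2) zt by (rule mp)
      ultimately have "L = 0" by (rule tendsto_unique[OF nontriv[OF P0inf]])
      with L have "eventually (\<lambda>p. dist (s a p z) 0 < 1/3) (inf sequentially (principal {p. prime p}))"
        by (intro tendstoD) auto
      then obtain N where N: "\<And>p. p \<ge> N \<Longrightarrow> prime p \<Longrightarrow> norm (s a p z) < 1/3"
        unfolding eventually_inf_principal eventually_sequentially by auto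
      define S where "S = {p::nat. prime p \<and> \<bar>snd z - real_of_int (a p) / real p\<bar> \<le> 1 / (2 * real p)}"
      have "infinite S" using elim(3) zy unfolding S_def by blast
      then obtain p where pS: "p \<in> S" and pN: "p \<ge> N" using infinite_nat_iff_unbounded_le by blast
      have pr: "prime p" and th: "\<bar>snd z - real_of_int (a p) / real p\<bar> \<le> 1 / (2 * real p)" using pS S_def by auto
      have p1: "p \<ge> 1" using pr prime_gt_0_nat by (simp add: Suc_le_eq)
      have "norm (G p (snd z - real_of_int (a p) / real p)) \<ge> real p / 3"
        by (rule G_lower[OF p1 th])
      then have "norm (s a p z) \<ge> 1/3" using p1 by (simp add: norm_s field_simps)
      with N[OF pN pr] show False by linarith
    qed
  qed
  then have "torus \<in> null_sets lborel" using AE_iff_null_sets[OF torus_sets] by blast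
  then show False using torus_measure by (simp add: null_sets_def)
qed

end
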